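(* Let $(\Omega,\mathcal{F})$ be a measurable space, $\mathrm{B}_b$ the space of bounded real-valued measurable functions, $C\subset\mathrm{B}_b$ a linear subspace containing the constants, and $H\colon C\to\mathbb{R}$ a convex map with $H(X+m)=H(X)+m$ for all $X\in C$, $m\in\mathbb{R}$. Then the following are equivalent: (i) $H$ is a monotone premium principle; (ii) $H(0)=0$ and $H(X)\le 0$ for all $X\in C$ with $X\le 0$.
   Context: A premium principle is a map $H\colon C\to\mathbb{R}$ with $H(X+m)=H(X)+m$ for $X\in C$, $m\in\mathbb{R}$, $H(0)=0$, and $H(X)\ge0$ for $X\in C$ with $X\ge0$, where $\le$ is the pointwise order. Monotone means $H(X)\le H(Y)$ whenever $X,Y\in C$, $X\le Y$. Convex means $H(\lambda X+(1-\lambda)Y)\le\lambda H(X)+(1-\lambda)H(Y)$ for $\lambda\in[0,1]$. *)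

theory Defs
  imports "HOL-Analysis.Analysis"
begin

definition bounded_measurable :: "'a measure \<Rightarrow> ('a \<Rightarrow> real) set" where
  "bounded_measurable M = {X \<in> borel_measurable M. bounded (X ` space M)}"

definition pw_le :: "'a measure \<Rightarrow> ('a \<Rightarrow> real) \<Rightarrow> ('a \<Rightarrow> real) \<Rightarrow> bool" where
  "pw_le M X Y = (\<forall>\<omega>\<in>space M. X \<omega> \<le> Y \<omega>)"

definition linear_subspace_with_constants :: "('a \<Rightarrow> real) set \<Rightarrow> bool" where
  "linear_subspace_with_constants C =
     ((\<forall>X\<in>C. \<forall>Y\<in>C. (\<lambda>\<omega>. X \<omega> + Y \<omega>) \<in> C) \<and>
      (\<forall>X\<in>C. \<forall>c::real. (\<lambda>\<omega>. c * X \<omega>) \<in> C) \<and>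
      (\<forall>m::real. (\<lambda>_. m) \<in> C))"

definition cash_additive :: "('a \<Rightarrow> real) set \<Rightarrow> (('a \<Rightarrow> real) \<Rightarrow> real) \<Rightarrow> bool" where
  "cash_additive C H = (\<forall>X\<in>C. \<forall>m::real. H (\<lambda>\<omega>. X \<omega> + m) = H X + m)"

definition premium_principle ::
  "'a measure \<Rightarrow> ('a \<Rightarrow> real) set \<Rightarrow> (('a \<Rightarrow> real) \<Rightarrow> real) \<Rightarrow> bool" where
  "premium_principle M C H =
     (cash_additive C H \<and> H (\<lambda>_. 0) = 0 \<and>
      (\<forall>X\<in>C. pw_le M (\<lambda>_. 0) X \<longrightarrow> H X \<ge> 0))"

definition monotone_map ::
  "'a measure \<Rightarrow> ('a \<Rightarrow> real) set \<Rightarrow> (('a \<Rightarrow> real) \<Rightarrow> real) \<Rightarrow> bool" where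
  "monotone_map M C H = (\<forall>X\<in>C. \<forall>Y\<in>C. pw_le M X Y \<longrightarrow> H X \<le> H Y)"

definition convex_map :: "('a \<Rightarrow> real) set \<Rightarrow> (('a \<Rightarrow> real) \<Rightarrow> real) \<Rightarrow> bool" where
  "convex_map C H = (\<forall>X\<in>C. \<forall>Y\<in>C. \<forall>l::real. 0 \<le> l \<and> l \<le> 1 \<longrightarrow>
      H (\<lambda>\<omega>. l * X \<omega> + (1 - l) * Y \<omega>) \<le> l * H X + (1 - l) * H Y)"

end

theory Submission
  imports Defs
begin

lemma eps_le:
  fixes a b c :: real
  assumes "\<And>e. 0 < e \<Longrightarrow> e < 1/2 \<Longrightarrow> a \<le> b + e * c"
  shows "a \<le> b"
proof (rule ccontr)
  assume n: "\<not> a \<le> b"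
  define e where "e = min (1/4) ((a - b) / (2 * (\<bar>c\<bar> + 1)))"
  have e0: "0 < e" using n by (simp add: e_def)
  have e1: "e < 1/2" by (simp add: e_def)
  have "e * c \<le> e * \<bar>c\<bar>" using e0 by (simp add: mult_left_mono)
  also have "e * \<bar>c\<bar> \<le> (a - b) / (2 * (\<bar>c\<bar> + 1)) * (\<bar>c\<bar> + 1)"
    using e0 by (intro mult_mono) (auto simp: e_def)
  also have "\<dots> = (a - b) / 2" by (simp add: field_simps)
  finally have "e * c \<le> (a - b)/2" .
  moreover have "a \<le> b + e * c" using assms[OF e0 e1] .
  ultimately have "a - b \<le> (a - b) / 2" by linarith
  hence "a - b \<le> 0" by simp
  with n show False by simp
qed

theorem proposition3p7:
  fixes M :: "'a measure" and C :: "('a \<Rightarrow> real) set" and H :: "('a \<Rightarrow> real) \<Rightarrow> real"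
  assumes "C \<subseteq> bounded_measurable M"
    and "linear_subspace_with_constants C"
    and "convex_map C H"
    and "cash_additive C H"
  shows "(premium_principle M C H \<and> monotone_map M C H) \<longleftrightarrow>
         (H (\<lambda>_. 0) = 0 \<and> (\<forall>X\<in>C. pw_le M X (\<lambda>_. 0) \<longrightarrow> H X \<le> 0))"
proof
  assume a: "premium_principle M C H \<and> monotone_map M C H"
  have z: "(\<lambda>_. 0::real) \<in> C" using assms(2) by (simp add: linear_subspace_with_constants_def)
  show "H (\<lambda>_. 0) = 0 \<and> (\<forall>X\<in>C. pw_le M X (\<lambda>_. 0) \<longrightarrow> H X \<le> 0)"
    using a z unfolding premium_principle_def monotone_map_def by fastforce
next
  assume a: "H (\<lambda>_. 0) = 0 \<and> (\<forall>X\<in>C. pw_le M X (\<lambda>_. 0) \<longrightarrow> H X \<le> 0)"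
  have add: "\<And>X Y. X \<in> C \<Longrightarrow> Y \<in> C \<Longrightarrow> (\<lambda>\<omega>. X \<omega> + Y \<omega>) \<in> C"
   and sc: "\<And>X c. X \<in> C \<Longrightarrow> (\<lambda>\<omega>. c * X \<omega>) \<in> C"
   and z: "(\<lambda>_. 0::real) \<in> C"
    using assms(2) by (auto simp: linear_subspace_with_constants_def)
  have cv: "\<And>X Y l. X \<in> C \<Longrightarrow> Y \<in> C \<Longrightarrow> 0 \<le> l \<Longrightarrow> l \<le> 1 \<Longrightarrow>
      H (\<lambda>\<omega>. l * X \<omega> + (1 - l) * Y \<omega>) \<le> l * H X + (1 - l) * H Y"
    using assms(3) by (simp add: convex_map_def)
  have mono: "monotone_map M C H"
    unfolding monotone_map_def
  proof (intro ballI impI)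
    fix X Y assume X: "X \<in> C" and Y: "Y \<in> C" and le: "pw_le M X Y"
    define W where "W = (\<lambda>\<omega>. X \<omega> + (-1) * Y \<omega>)"
    have W: "W \<in> C" unfolding W_def using add[OF X sc[OF Y]] .
    have Y2: "(\<lambda>\<omega>. 2 * Y \<omega>) \<in> C" using sc[OF Y] .
    show "H X \<le> H Y"
    proof (rule eps_le[where c = "H (\<lambda>\<omega>. 2 * Y \<omega>) - 2 * H Y"])
      fix e :: real assume e0: "0 < e" and e1: "e < 1/2"
      define l where "l = 1 - e"
      have l0: "0 < l" "l < 1" "1/2 < l" using e0 e1 by (auto simp: l_def)
      define A where "A = (\<lambda>\<omega>. (1/l) * Y \<omega>)"
      define B where "B = (\<lambda>\<omega>. (1/(1-l)) * W \<omega>)"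
      have A: "A \<in> C" unfolding A_def by (rule sc[OF Y])
      have B: "B \<in> C" unfolding B_def by (rule sc[OF W])
      have "(\<lambda>\<omega>. l * A \<omega> + (1 - l) * B \<omega>) = X"
        using l0 by (auto simp: A_def B_def W_def)
      hence h1: "H X \<le> l * H A + (1 - l) * H B"
        using cv[OF A B, of l] l0 by simp
      have "pw_le M B (\<lambda>_. 0)"
        using le l0 unfolding pw_le_def B_def W_def
        by (auto intro!: divide_nonpos_pos)
      hence hB: "H B \<le> 0" using a B by blast
      define m where "m = 2 - 1/l"
      have m: "0 \<le> m" "m \<le> 1" using l0 by (auto simp: m_def field_simps)
      have "(\<lambda>\<omega>. m * Y \<omega> + (1 - m) * (2 * Y \<omega>)) = A"
        by (auto simp: A_def m_def algebra_simps)
      hence h2: "H A \<le> m * H Y + (1 - m) * H (\<lambda>\<omega>. 2 * Y \<omega>)"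
        using cv[OF Y Y2 m] by simp
      have "l * H A \<le> l * (m * H Y + (1 - m) * H (\<lambda>\<omega>. 2 * Y \<omega>))"
        using h2 l0 by (simp add: mult_left_mono)
      also have "\<dots> = H Y + e * (H (\<lambda>\<omega>. 2 * Y \<omega>) - 2 * H Y)"
      proof -
        have "l * m = 2 * l - 1" "l * (1 - m) = 1 - l"
          using l0 by (auto simp: m_def field_simps)
        hence "l * (m * H Y + (1 - m) * H (\<lambda>\<omega>. 2 * Y \<omega>)) =
            (2 * l - 1) * H Y + (1 - l) * H (\<lambda>\<omega>. 2 * Y \<omega>)"
          by (metis (no_types, lifting) distrib_left mult.assoc)
        thus ?thesis by (simp add: l_def algebra_simps)
      qed
      finally have "l * H A \<le> H Y + e * (H (\<lambda>\<omega>. 2 * Y \<omega>) - 2 * H Y)" .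
      moreover have "(1 - l) * H B \<le> 0" using hB l0 by (simp add: mult_nonneg_nonpos)
      ultimately show "H X \<le> H Y + e * (H (\<lambda>\<omega>. 2 * Y \<omega>) - 2 * H Y)"
        using h1 by linarith
    qed
  qed
  have "premium_principle M C H"
    unfolding premium_principle_def
  proof (intro conjI ballI impI)
    show "cash_additive C H" by (rule assms(4))
    show "H (\<lambda>_. 0) = 0" using a by simp
    fix X assume "X \<in> C" "pw_le M (\<lambda>_. 0) X"
    then show "0 \<le> H X" using mono z a unfolding monotone_map_def by force
  qed
  with mono show "premium_principle M C H \<and> monotone_map M C H" by simp
qed

end
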